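(* Let $H$ be a monoid. A set $X\in\mathcal{P}_{\mathrm{fin},1}(H)$ is irreducible but not an atom in $\mathcal{P}_{\mathrm{fin},1}(H)$ if and only if $X=\{1_H,x\}$ for some $x\in H$ such that $x^2=1_H$ or $x^2=x$.
   Context: For a monoid $H$, $\mathcal{P}_{\mathrm{fin},1}(H)$ denotes the set of all non-empty finite subsets of $H$ containing $1_H$, a monoid under $XY=\{xy:x\in X,y\in Y\}$ with identity $\{1_H\}$. In a monoid $M$: $x\mid_M y$ iff $y\in MxM=\{uxv:u,v\in M\}$; $x,y$ are associated if each divides the other; $x$ properly divides $y$ if $x\mid_M y$ and $y\nmid_M x$. A unit-divisor is an element dividing $1_M$; other elements are non-unit-divisors. An irreducible is a non-unit-divisor $a$ such that $a\neq xy$ for all non-unit-divisors $x,y$ properly dividing $a$. An atom is a non-unit-divisor that is not a product of two non-unit-divisors. *)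

theory Defs
  imports Main
begin

definition mon_dvd :: "'m set \<Rightarrow> ('m \<Rightarrow> 'm \<Rightarrow> 'm) \<Rightarrow> 'm \<Rightarrow> 'm \<Rightarrow> bool" where
  "mon_dvd M f x y \<longleftrightarrow> (\<exists>u\<in>M. \<exists>v\<in>M. y = f (f u x) v)"

definition mon_unit_divisor :: "'m set \<Rightarrow> ('m \<Rightarrow> 'm \<Rightarrow> 'm) \<Rightarrow> 'm \<Rightarrow> 'm \<Rightarrow> bool" where
  "mon_unit_divisor M f e x \<longleftrightarrow> mon_dvd M f x e"

definition mon_proper_dvd :: "'m set \<Rightarrow> ('m \<Rightarrow> 'm \<Rightarrow> 'm) \<Rightarrow> 'm \<Rightarrow> 'm \<Rightarrow> bool" where
  "mon_proper_dvd M f x y \<longleftrightarrow> mon_dvd M f x y \<and> \<not> mon_dvd M f y x"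

definition mon_irreducible :: "'m set \<Rightarrow> ('m \<Rightarrow> 'm \<Rightarrow> 'm) \<Rightarrow> 'm \<Rightarrow> 'm \<Rightarrow> bool" where
  "mon_irreducible M f e a \<longleftrightarrow> a \<in> M \<and> \<not> mon_unit_divisor M f e a \<and>
     (\<forall>x\<in>M. \<forall>y\<in>M. \<not> mon_unit_divisor M f e x \<and> \<not> mon_unit_divisor M f e y \<and>
        mon_proper_dvd M f x a \<and> mon_proper_dvd M f y a \<longrightarrow> a \<noteq> f x y)"

definition mon_atom :: "'m set \<Rightarrow> ('m \<Rightarrow> 'm \<Rightarrow> 'm) \<Rightarrow> 'm \<Rightarrow> 'm \<Rightarrow> bool" where
  "mon_atom M f e a \<longleftrightarrow> a \<in> M \<and> \<not> mon_unit_divisor M f e a \<and>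
     (\<forall>x\<in>M. \<forall>y\<in>M. \<not> mon_unit_divisor M f e x \<and> \<not> mon_unit_divisor M f e y \<longrightarrow> a \<noteq> f x y)"

definition Pfin1 :: "'a::monoid_mult set set" where
  "Pfin1 = {X. finite X \<and> X \<noteq> {} \<and> 1 \<in> X}"

definition setmul :: "'a::monoid_mult set \<Rightarrow> 'a set \<Rightarrow> 'a set" where
  "setmul X Y = {x * y | x y. x \<in> X \<and> y \<in> Y}"

end

theory Submission
  imports Defs
begin

lemma Pfin1_iff: "X \<in> Pfin1 \<longleftrightarrow> finite X \<and> X \<noteq> {} \<and> 1 \<in> X"
  by (simp add: Pfin1_def)

lemma setmul_sub1: "1 \<in> B \<Longrightarrow> A \<subseteq> setmul A B"
  unfolding setmul_def by force

lemma setmul_sub2: "1 \<in> A \<Longrightarrow> B \<subseteq> setmul A B"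
  unfolding setmul_def by force

lemma setmul_one1: "setmul {1} B = B"
  unfolding setmul_def by auto

lemma setmul_one2: "setmul A {1} = A"
  unfolding setmul_def by auto

lemma setmul_closed: "A \<in> Pfin1 \<Longrightarrow> B \<in> Pfin1 \<Longrightarrow> setmul A B \<in> Pfin1"
proof -
  assume a: "A \<in> Pfin1" "B \<in> Pfin1"
  have "setmul A B = (\<lambda>(x,y). x*y) ` (A \<times> B)" unfolding setmul_def by auto
  hence "finite (setmul A B)" using a by (simp add: Pfin1_iff)
  moreover have "(1::'a) \<in> setmul A B" using a unfolding Pfin1_iff setmul_def by force
  ultimately show ?thesis by (auto simp: Pfin1_iff)
qed

lemma dvd_sub: "U \<in> Pfin1 \<Longrightarrow> mon_dvd Pfin1 setmul Y X \<Longrightarrow> Y \<subseteq> X"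
  unfolding mon_dvd_def
  by (metis Pfin1_iff setmul_sub1 setmul_sub2 subset_trans)

lemma unitdiv_iff: "Y \<in> Pfin1 \<Longrightarrow> mon_unit_divisor Pfin1 setmul {1} Y \<longleftrightarrow> Y = {1}"
proof
  assume a: "Y \<in> Pfin1" "mon_unit_divisor Pfin1 setmul {1} Y"
  hence "Y \<subseteq> {1}" using dvd_sub unfolding mon_unit_divisor_def by blast
  thus "Y = {1}" using a(1) by (auto simp: Pfin1_iff)
next
  assume "Y = {1}"
  thus "mon_unit_divisor Pfin1 setmul {1} Y" unfolding mon_unit_divisor_def mon_dvd_def
    by (rule_tac x="{1}" in bexI, rule_tac x="{1}" in bexI) (auto simp: setmul_one1 Pfin1_iff)
qed

lemma dvd_l: "A \<in> Pfin1 \<Longrightarrow> B \<in> Pfin1 \<Longrightarrow> mon_dvd Pfin1 setmul A (setmul A B)"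
  unfolding mon_dvd_def
  by (rule_tac x="{1}" in bexI, rule_tac x="B" in bexI) (auto simp: setmul_one1 Pfin1_iff)

lemma dvd_r: "A \<in> Pfin1 \<Longrightarrow> B \<in> Pfin1 \<Longrightarrow> mon_dvd Pfin1 setmul B (setmul A B)"
  unfolding mon_dvd_def
  by (rule_tac x="A" in bexI, rule_tac x="{1}" in bexI) (auto simp: setmul_one2 Pfin1_iff)

lemma proper_iff: "A \<in> Pfin1 \<Longrightarrow> X \<in> Pfin1 \<Longrightarrow>
   mon_proper_dvd Pfin1 setmul A X \<longleftrightarrow> mon_dvd Pfin1 setmul A X \<and> A \<noteq> X"
  unfolding mon_proper_dvd_def
  by (metis dvd_sub dvd_l setmul_one2 subset_antisym)

lemma char_irr:
  assumes X: "X \<in> Pfin1"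
  shows "mon_irreducible Pfin1 setmul {1} X \<longleftrightarrow> X \<noteq> {1} \<and>
    (\<forall>A\<in>Pfin1. \<forall>B\<in>Pfin1. A \<noteq> {1} \<and> B \<noteq> {1} \<and> X = setmul A B \<longrightarrow> A = X \<or> B = X)"
proof
  assume h: "mon_irreducible Pfin1 setmul {1} X"
  show "X \<noteq> {1} \<and>
    (\<forall>A\<in>Pfin1. \<forall>B\<in>Pfin1. A \<noteq> {1} \<and> B \<noteq> {1} \<and> X = setmul A B \<longrightarrow> A = X \<or> B = X)"
  proof (intro conjI ballI impI)
    show "X \<noteq> {1}" using h X unitdiv_iff unfolding mon_irreducible_def by blast
  next
    fix A B assume AB: "A \<in> Pfin1" "B \<in> Pfin1" "A \<noteq> {1} \<and> B \<noteq> {1} \<and> X = setmul A B"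
    show "A = X \<or> B = X"
    proof (rule ccontr)
      assume "\<not> (A = X \<or> B = X)"
      hence "mon_proper_dvd Pfin1 setmul A X" "mon_proper_dvd Pfin1 setmul B X"
        using AB X proper_iff[of A X] proper_iff[of B X] dvd_l[of A B] dvd_r[of A B] by auto
      thus False using h AB unitdiv_iff unfolding mon_irreducible_def by blast
    qed
  qed
next
  assume h: "X \<noteq> {1} \<and>
    (\<forall>A\<in>Pfin1. \<forall>B\<in>Pfin1. A \<noteq> {1} \<and> B \<noteq> {1} \<and> X = setmul A B \<longrightarrow> A = X \<or> B = X)"
  have u: "\<not> mon_unit_divisor Pfin1 setmul {1} X" using h X unitdiv_iff by blast
  have w: "X \<noteq> setmul A B"
    if "A \<in> Pfin1" "B \<in> Pfin1" "\<not> mon_unit_divisor Pfin1 setmul {1} A"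
      "\<not> mon_unit_divisor Pfin1 setmul {1} B"
      "mon_proper_dvd Pfin1 setmul A X" "mon_proper_dvd Pfin1 setmul B X" for A B
  proof
    assume e: "X = setmul A B"
    have "A \<noteq> {1}" "B \<noteq> {1}" using that unitdiv_iff by blast+
    moreover have "A \<noteq> X" "B \<noteq> X" using that proper_iff X by blast+
    ultimately show False using h e that(1,2) by blast
  qed
  show "mon_irreducible Pfin1 setmul {1} X"
    unfolding mon_irreducible_def
    by (intro conjI X u ballI impI; elim conjE; rule w; assumption)
qed

lemma char_atom:
  assumes X: "X \<in> Pfin1"
  shows "mon_atom Pfin1 setmul {1} X \<longleftrightarrow> X \<noteq> {1} \<and>
    (\<forall>A\<in>Pfin1. \<forall>B\<in>Pfin1. A \<noteq> {1} \<and> B \<noteq> {1} \<longrightarrow> X \<noteq> setmul A B)"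
  unfolding mon_atom_def using X by (auto simp: unitdiv_iff)


lemma core:
  fixes X :: "'a::monoid_mult set" and z :: 'a
  assumes X: "X \<in> Pfin1"
    and irr: "\<forall>A\<in>Pfin1. \<forall>B\<in>Pfin1. A \<noteq> {1} \<and> B \<noteq> {1} \<and> X = setmul A B \<longrightarrow> A = X \<or> B = X"
    and z: "z \<in> X" "z \<noteq> 1"
    and cl: "(\<forall>y\<in>X. y * z \<in> X) \<or> (\<forall>y\<in>X. z * y \<in> X)"
  shows "X = {1, z} \<and> (z ^ 2 = 1 \<or> z ^ 2 = z)"
proof -
  have irr': "A = X \<or> B = X" if "A \<in> Pfin1" "B \<in> Pfin1" "A \<noteq> {1}" "B \<noteq> {1}" "X = setmul A B" for A B
    using irr that by blast
  have one: "1 \<in> X" and fin: "finite X" using X by (auto simp: Pfin1_iff)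
  have pw: "(\<forall>y\<in>X. \<forall>i. y * z ^ i \<in> X) \<or> (\<forall>y\<in>X. \<forall>i. z ^ i * y \<in> X)"
  proof (cases "\<forall>y\<in>X. y * z \<in> X")
    case True
    have "y * z ^ i \<in> X" if "y \<in> X" for y i
    proof (induction i)
      case (Suc i)
      have "y * z ^ Suc i = (y * z ^ i) * z" by (metis power_Suc2 mult.assoc)
      thus ?case using Suc True that by simp
    qed (simp add: that)
    thus ?thesis by blast
  next
    case False
    hence c: "\<forall>y\<in>X. z * y \<in> X" using cl by blast
    have "z ^ i * y \<in> X" if "y \<in> X" for y i
      using that by (induction i) (auto simp: mult.assoc c)
    thus ?thesis by blast
  qed
  have zi: "z ^ i \<in> X" for i using pw one by (metis mult_1_left mult_1_right)
  define P where "P = range (\<lambda>i::nat. z ^ i)"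
  have PX: "P \<subseteq> X" using zi P_def by auto
  have finP: "finite P" using PX fin finite_subset by blast
  have P1: "P \<in> Pfin1" using finP P_def by (auto simp: Pfin1_iff intro: image_eqI[where x=0])
  have zP: "z \<in> P" unfolding P_def by (rule image_eqI[where x=1]) auto
  have XP: "X = P"
  proof (rule ccontr)
    assume ne: "X \<noteq> P"
    define D where "D = insert 1 (X - P)"
    have D1: "D \<in> Pfin1" using fin D_def by (auto simp: Pfin1_iff)
    have Dn1: "D \<noteq> {1}"
    proof
      assume "D = {1}"
      hence "X - P \<subseteq> {1}" using D_def by auto
      moreover have "1 \<in> P" unfolding P_def by (rule image_eqI[where x=0]) auto
      ultimately have "X \<subseteq> P" by auto
      thus False using ne PX by auto
    qed
    have DX: "D \<noteq> X" using z zP D_def by auto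
    have Pn1: "P \<noteq> {1}" using zP z by auto
    have "X = setmul D P \<or> X = setmul P D"
    proof (cases "\<forall>y\<in>X. \<forall>i. y * z ^ i \<in> X")
      case True
      have "setmul D P \<subseteq> X" unfolding setmul_def D_def P_def using True one by auto
      moreover have "X \<subseteq> setmul D P"
      proof
        fix y assume y: "y \<in> X"
        show "y \<in> setmul D P"
        proof (cases "y \<in> P")
          case True
          then show ?thesis unfolding setmul_def D_def by force
        next
          case False
          hence "y \<in> D" using y D_def by auto
          moreover have "(1::'a) \<in> P" unfolding P_def by (rule image_eqI[where x=0]) auto
          ultimately show ?thesis unfolding setmul_def by force
        qed
      qed
      ultimately show ?thesis by auto
    next
      case False
      hence c: "\<forall>y\<in>X. \<forall>i. z ^ i * y \<in> X" using pw by blast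
      have "setmul P D \<subseteq> X" unfolding setmul_def D_def P_def using c zi by auto
      moreover have "X \<subseteq> setmul P D"
      proof
        fix y assume y: "y \<in> X"
        show "y \<in> setmul P D"
        proof (cases "y \<in> P")
          case True
          then show ?thesis unfolding setmul_def D_def by force
        next
          case False
          hence "y \<in> D" using y D_def by auto
          moreover have "(1::'a) \<in> P" unfolding P_def by (rule image_eqI[where x=0]) auto
          ultimately show ?thesis unfolding setmul_def by force
        qed
      qed
      ultimately show ?thesis by auto
    qed
    thus False using irr'[OF D1 P1 Dn1 Pn1] irr'[OF P1 D1 Pn1 Dn1] DX ne by auto
  qed
  define C where "C = (\<lambda>m::nat. (\<lambda>i. z ^ i) ` {..m})"
  have "\<exists>N. X = C N"
  proof -
    define f where "f = (\<lambda>p. SOME i. p = z ^ i)"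
    have ff: "z ^ f (z ^ i) = z ^ i" for i using someI[of "\<lambda>j. z ^ i = z ^ j" i] unfolding f_def by simp
    define N where "N = Max (f ` P)"
    have fN: "f (z ^ i) \<le> N" for i unfolding N_def using finP P_def by (intro Max_ge) auto
    have "P \<subseteq> C N"
    proof
      fix p assume "p \<in> P"
      then obtain i where p: "p = z ^ i" unfolding P_def by auto
      have "z ^ f (z ^ i) \<in> C N" unfolding C_def using fN[of i] by auto
      thus "p \<in> C N" using ff[of i] p by simp
    qed
    moreover have "C N \<subseteq> P" unfolding P_def C_def by auto
    ultimately show ?thesis using XP by auto
  qed
  hence ex: "\<exists>N. X = C N" .
  define n where "n = (LEAST N. X = C N)"
  have Xn: "X = C n" unfolding n_def using ex by (rule LeastI_ex)
  have mn: "m < n \<Longrightarrow> X \<noteq> C m" for m unfolding n_def using not_less_Least by blast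
  have C0: "C 0 = {1}" unfolding C_def by auto
  have a1: "{..1::nat} = {0, 1}" by auto
  have C1: "C 1 = {1, z}" unfolding C_def a1 by simp
  have n0: "n \<noteq> 0"
  proof
    assume "n = 0"
    hence "X = {1}" using Xn C0 by simp
    thus False using z by simp
  qed
  show ?thesis
  proof (cases "n = 1")
    case True
    hence "X = {1, z}" using Xn C1 by simp
    moreover have "z ^ 2 \<in> X" using zi by blast
    ultimately show ?thesis using z by auto
  next
    case False
    hence n2: "n \<ge> 2" using n0 by auto
    have eq: "X = setmul {1, z} (C (n - 1))"
    proof
      show "setmul {1, z} (C (n - 1)) \<subseteq> X"
      proof
        fix w assume "w \<in> setmul {1, z} (C (n - 1))"
        then obtain i where "i \<le> n - 1" "w = z ^ i \<or> w = z * z ^ i"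
          unfolding setmul_def C_def by auto
        thus "w \<in> X" using zi by (metis power_Suc)
      qed
    next
      show "X \<subseteq> setmul {1, z} (C (n - 1))"
      proof
        fix w assume "w \<in> X"
        then obtain i where i: "i \<le> n" "w = z ^ i" using Xn C_def by auto
        show "w \<in> setmul {1, z} (C (n - 1))"
        proof (cases "i \<le> n - 1")
          case True
          hence "w \<in> C (n - 1)" using i C_def by auto
          hence "w = 1 * w \<and> w \<in> C (n - 1)" by simp
          thus ?thesis unfolding setmul_def by blast
        next
          case False
          hence "i = Suc (n - 1)" using i n2 by auto
          hence "w = z ^ Suc (n - 1)" using i by simp
          hence "w = z * z ^ (n - 1)" by (simp only: power_Suc)
          moreover have "z ^ (n - 1) \<in> C (n - 1)" using C_def by auto
          ultimately show ?thesis unfolding setmul_def by blast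
        qed
      qed
    qed
    have A1: "{1, z} \<in> Pfin1" by (simp add: Pfin1_iff)
    have B1: "C (n - 1) \<in> Pfin1" unfolding C_def Pfin1_iff
      by (auto intro: image_eqI[where x=0])
    have An: "{1, z} \<noteq> {1}" using z by auto
    have "z ^ 1 \<in> C (n - 1)" unfolding C_def using n2 by (intro imageI) auto
    hence Bn: "C (n - 1) \<noteq> {1}" using z by auto
    have AX: "{1, z} \<noteq> X" using mn[of 1] n2 C1 by auto
    have BX: "C (n - 1) \<noteq> X" using mn[of "n - 1"] n2 by auto
    show ?thesis using irr'[OF A1 B1 An Bn eq] AX BX by simp
  qed
qed

theorem proposition2p3:
  fixes X :: "'a::monoid_mult set"
  assumes "X \<in> Pfin1"
  shows "(mon_irreducible Pfin1 setmul {1} X \<and> \<not> mon_atom Pfin1 setmul {1} X) \<longleftrightarrow>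
         (\<exists>x. x \<noteq> 1 \<and> X = {1, x} \<and> (x ^ 2 = 1 \<or> x ^ 2 = x))"
proof
  assume h: "mon_irreducible Pfin1 setmul {1} X \<and> \<not> mon_atom Pfin1 setmul {1} X"
  have X1: "X \<noteq> {1}" and irr: "\<forall>A\<in>Pfin1. \<forall>B\<in>Pfin1. A \<noteq> {1} \<and> B \<noteq> {1} \<and> X = setmul A B \<longrightarrow> A = X \<or> B = X"
    using h char_irr[OF assms] by auto
  obtain A B where AB: "A \<in> Pfin1" "B \<in> Pfin1" "A \<noteq> {1}" "B \<noteq> {1}" "X = setmul A B"
    using h char_atom[OF assms] X1 by auto
  have "A = X \<or> B = X" using irr AB by blast
  then obtain z where z: "z \<in> X" "z \<noteq> 1" "(\<forall>y\<in>X. y * z \<in> X) \<or> (\<forall>y\<in>X. z * y \<in> X)"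
  proof
    assume "A = X"
    then obtain b where b: "b \<in> B" "b \<noteq> 1" using AB(2,4) by (auto simp: Pfin1_iff)
    have "b \<in> X" using AB setmul_sub2[of A B] b by (auto simp: Pfin1_iff)
    moreover have "\<forall>y\<in>X. y * b \<in> X" using AB \<open>A = X\<close> b unfolding setmul_def by blast
    ultimately show thesis using that b by blast
  next
    assume "B = X"
    then obtain a where a: "a \<in> A" "a \<noteq> 1" using AB(1,3) by (auto simp: Pfin1_iff)
    have "a \<in> X" using AB setmul_sub1[of B A] a by (auto simp: Pfin1_iff)
    moreover have "\<forall>y\<in>X. a * y \<in> X" using AB \<open>B = X\<close> a unfolding setmul_def by blast
    ultimately show thesis using that a by blast
  qed
  from core[OF assms irr z] show "\<exists>x. x \<noteq> 1 \<and> X = {1, x} \<and> (x ^ 2 = 1 \<or> x ^ 2 = x)"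
    using z by blast
next
  assume "\<exists>x. x \<noteq> 1 \<and> X = {1, x} \<and> (x ^ 2 = 1 \<or> x ^ 2 = x)"
  then obtain x where x: "x \<noteq> 1" "X = {1, x}" "x * x = 1 \<or> x * x = x"
    by (auto simp: power2_eq_square)
  have XX: "setmul X X = X"
  proof
    show "setmul X X \<subseteq> X" using x unfolding setmul_def by auto
    show "X \<subseteq> setmul X X" using setmul_sub1[of X X] x by auto
  qed
  have X1: "X \<noteq> {1}" using x by auto
  have irr: "\<forall>A\<in>Pfin1. \<forall>B\<in>Pfin1. A \<noteq> {1} \<and> B \<noteq> {1} \<and> X = setmul A B \<longrightarrow> A = X \<or> B = X"
  proof (intro ballI impI)
    fix A B assume AB: "A \<in> Pfin1" "B \<in> Pfin1" "A \<noteq> {1} \<and> B \<noteq> {1} \<and> X = setmul A B"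
    have "A \<subseteq> X" using AB setmul_sub1[of B A] by (auto simp: Pfin1_iff)
    moreover have "1 \<in> A" using AB by (auto simp: Pfin1_iff)
    moreover have "A \<noteq> {1}" using AB by blast
    ultimately have "A = {1, x}" using x(2) by auto
    hence "A = X" using x(2) by simp
    thus "A = X \<or> B = X" ..
  qed
  show "mon_irreducible Pfin1 setmul {1} X \<and> \<not> mon_atom Pfin1 setmul {1} X"
  proof
    show "mon_irreducible Pfin1 setmul {1} X" by (rule char_irr[OF assms, THEN iffD2], rule conjI, rule X1, rule irr)
    have "\<not> (\<forall>A\<in>Pfin1. \<forall>B\<in>Pfin1. A \<noteq> {1} \<and> B \<noteq> {1} \<longrightarrow> X \<noteq> setmul A B)"
    proof
      assume hh: "\<forall>A\<in>Pfin1. \<forall>B\<in>Pfin1. A \<noteq> {1} \<and> B \<noteq> {1} \<longrightarrow> X \<noteq> setmul A B"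
      have "X \<noteq> setmul X X" using hh assms X1 by blast
      thus False using XX by simp
    qed
    thus "\<not> mon_atom Pfin1 setmul {1} X" using char_atom[OF assms] by simp
  qed
qed

end
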